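(* Let $\rho_1,\rho_2,k_1,k_2,L>0$ and $0<\alpha<1$, take $\eta=0$, and let $\mathcal{A}$ be the operator on $\mathcal{H}$ described in the context. Then $\mathcal{A}$ is not invertible; consequently $0\in\sigma(\mathcal{A})$.
   Context: Set $\mu(\xi)=|\xi|^{(2\alpha-1)/2}$ for $\xi\in\mathbb{R}$ and $\mathfrak{C}=\pi^{-1}\sin(\alpha\pi)$. All function spaces are complex. Let $\mathbb{H}^1_0=\{(u,v)\in H^1(-L,0)\times H^1(0,L):\ u(-L)=v(L)=0,\ u(0)=v(0)\}$, $\mathbb{L}^2=L^2(-L,0)\times L^2(0,L)$, and $\mathcal{H}=\mathbb{H}^1_0\times\mathbb{L}^2\times L^2(\mathbb{R};\mathbb{L}^2)$, whose elements are written $\mathbb{U}=(u,v,U,V,\varphi_1,\varphi_2)$ with $(u,v)\in\mathbb{H}^1_0$, $(U,V)\in\mathbb{L}^2$, $\varphi_1\in L^2(\mathbb{R};L^2(-L,0))$, $\varphi_2\in L^2(\mathbb{R};L^2(0,L))$ (functions of $(x,\xi)$). $\mathcal{H}$ is a Hilbert space with inner product $\langle\mathbb{U},\tilde{\mathbb{U}}\rangle_{\mathcal H}=\rho_1\int_{-L}^0U\overline{\tilde U}dx+\rho_2\int_0^LV\overline{\tilde V}dx+k_1\int_{-L}^0u_x\overline{\tilde u_x}dx+k_2\int_0^Lv_x\overline{\tilde v_x}dx+\mathfrak{C}\int_{\mathbb R}\int_{-L}^0\varphi_1\overline{\tilde\varphi_1}\,dx\,d\xi+\mathfrak{C}\int_{\mathbb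 R}\int_0^L\varphi_2\overline{\tilde\varphi_2}\,dx\,d\xi$. The domain $\mathcal{D}(\mathcal{A})$ is the set of $\mathbb{U}=(u,v,U,V,\varphi_1,\varphi_2)\in\mathcal{H}$ such that $(U,V)\in\mathbb{H}^1_0$, $u\in H^2(-L,0)$, $v\in H^2(0,L)$, $k_1u_x(0)=k_2v_x(0)$, $|\xi|\varphi_1\in L^2(\mathbb{R};L^2(-L,0))$, $-(|\xi|^2+\eta)\varphi_1+\mu(\xi)U\in L^2(\mathbb{R};L^2(-L,0))$, $|\xi|\varphi_2\in L^2(\mathbb{R};L^2(0,L))$, $-(|\xi|^2+\eta)\varphi_2+\mu(\xi)V\in L^2(\mathbb{R};L^2(0,L))$; and $$\mathcal{A}\mathbb{U}=\Big(U,\ V,\ \tfrac{1}{\rho_1}\big[k_1u_{xx}-\mathfrak{C}\textstyle\int_{\mathbb R}\mu(\xi)\varphi_1(\cdot,\xi)d\xi\big],\ \tfrac{1}{\rho_2}\big[k_2v_{xx}-\mathfrak{C}\textstyle\int_{\mathbb R}\mu(\xi)\varphi_2(\cdot,\xi)d\xi\big],\ -(|\xi|^2+\eta)\varphi_1+\mu(\xi)U,\ -(|\xi|^2+\eta)\varphi_2+\mu(\xi)V\Big).$$ *)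

theory Defs
  imports "HOL-Analysis.Analysis"
begin

text \<open>States U = (u, v, U, V, phi1, phi2).  u, U are functions on (-L,0),
  v, V on (0,L), phi1 phi2 are functions of (x, xi).  Elements of the
  L2/Sobolev spaces are represented by (raw) functions; equality in the
  Hilbert space is equality modulo the Hilbert norm (see Heq).\<close>

type_synonym state =
  "(real \<Rightarrow> complex) \<times> (real \<Rightarrow> complex) \<times> (real \<Rightarrow> complex) \<times> (real \<Rightarrow> complex)
   \<times> (real \<Rightarrow> real \<Rightarrow> complex) \<times> (real \<Rightarrow> real \<Rightarrow> complex)"

definition mu :: "real \<Rightarrow> real \<Rightarrow> real" where
  "mu \<alpha> \<xi> = \<bar>\<xi>\<bar> powr ((2 * \<alpha> - 1) / 2)"

definition frakC :: "real \<Rightarrow> real" where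
  "frakC \<alpha> = sin (\<alpha> * pi) / pi"

definition L2on :: "'a::euclidean_space set \<Rightarrow> ('a \<Rightarrow> complex) \<Rightarrow> bool" where
  "L2on S f \<longleftrightarrow> set_borel_measurable lborel S f \<and>
                 set_integrable lborel S (\<lambda>x. (cmod (f x))\<^sup>2)"

text \<open>u is (the absolutely continuous representative of) an H^1(a,b) function
  with derivative g in L2(a,b).\<close>
definition has_L2_deriv :: "real \<Rightarrow> real \<Rightarrow> (real \<Rightarrow> complex) \<Rightarrow> (real \<Rightarrow> complex) \<Rightarrow> bool" where
  "has_L2_deriv a b u g \<longleftrightarrow> L2on {a..b} g \<and>
     (\<forall>x\<in>{a..b}. u x = u a + (LINT t:{a..x}|lborel. g t))"

definition H1 :: "real \<Rightarrow> real \<Rightarrow> (real \<Rightarrow> complex) \<Rightarrow> bool" where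
  "H1 a b u \<longleftrightarrow> (\<exists>g. has_L2_deriv a b u g)"

definition d1 :: "real \<Rightarrow> real \<Rightarrow> (real \<Rightarrow> complex) \<Rightarrow> (real \<Rightarrow> complex)" where
  "d1 a b u = (SOME g. has_L2_deriv a b u g)"

definition d2 :: "real \<Rightarrow> real \<Rightarrow> (real \<Rightarrow> complex) \<Rightarrow> (real \<Rightarrow> complex)" where
  "d2 a b u = (SOME h. \<exists>g. has_L2_deriv a b u g \<and> has_L2_deriv a b g h)"

definition H10 :: "real \<Rightarrow> (real \<Rightarrow> complex) \<Rightarrow> (real \<Rightarrow> complex) \<Rightarrow> bool" where
  "H10 L u v \<longleftrightarrow> H1 (-L) 0 u \<and> H1 0 L v \<and> u (-L) = 0 \<and> v L = 0 \<and> u 0 = v 0"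

definition inH :: "real \<Rightarrow> state \<Rightarrow> bool" where
  "inH L W = (case W of (u, v, U, V, \<phi>1, \<phi>2) \<Rightarrow>
     H10 L u v \<and> L2on {-L..0} U \<and> L2on {0..L} V \<and>
     L2on ({-L..0} \<times> UNIV) (\<lambda>(x, \<xi>). \<phi>1 x \<xi>) \<and>
     L2on ({0..L} \<times> UNIV) (\<lambda>(x, \<xi>). \<phi>2 x \<xi>))"

definition Hnorm2 :: "real \<Rightarrow> real \<Rightarrow> real \<Rightarrow> real \<Rightarrow> real \<Rightarrow> real \<Rightarrow> state \<Rightarrow> real" where
  "Hnorm2 \<rho>1 \<rho>2 k1 k2 \<alpha> L W = (case W of (u, v, U, V, \<phi>1, \<phi>2) \<Rightarrow>
       \<rho>1 * (LINT x:{-L..0}|lborel. (cmod (U x))\<^sup>2)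
     + \<rho>2 * (LINT x:{0..L}|lborel. (cmod (V x))\<^sup>2)
     + k1 * (LINT x:{-L..0}|lborel. (cmod (d1 (-L) 0 u x))\<^sup>2)
     + k2 * (LINT x:{0..L}|lborel. (cmod (d1 0 L v x))\<^sup>2)
     + frakC \<alpha> * (LINT p:({-L..0} \<times> UNIV)|lborel. (cmod (\<phi>1 (fst p) (snd p)))\<^sup>2)
     + frakC \<alpha> * (LINT p:({0..L} \<times> UNIV)|lborel. (cmod (\<phi>2 (fst p) (snd p)))\<^sup>2))"

definition Hnorm :: "real \<Rightarrow> real \<Rightarrow> real \<Rightarrow> real \<Rightarrow> real \<Rightarrow> real \<Rightarrow> state \<Rightarrow> real" where
  "Hnorm \<rho>1 \<rho>2 k1 k2 \<alpha> L W = sqrt (Hnorm2 \<rho>1 \<rho>2 k1 k2 \<alpha> L W)"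

definition st_add :: "state \<Rightarrow> state \<Rightarrow> state" where
  "st_add W W' = (case W of (u, v, U, V, \<phi>1, \<phi>2) \<Rightarrow> case W' of (u', v', U', V', \<psi>1, \<psi>2) \<Rightarrow>
     (\<lambda>x. u x + u' x, \<lambda>x. v x + v' x, \<lambda>x. U x + U' x, \<lambda>x. V x + V' x,
      \<lambda>x \<xi>. \<phi>1 x \<xi> + \<psi>1 x \<xi>, \<lambda>x \<xi>. \<phi>2 x \<xi> + \<psi>2 x \<xi>))"

definition st_scale :: "complex \<Rightarrow> state \<Rightarrow> state" where
  "st_scale c W = (case W of (u, v, U, V, \<phi>1, \<phi>2) \<Rightarrow>
     (\<lambda>x. c * u x, \<lambda>x. c * v x, \<lambda>x. c * U x, \<lambda>x. c * V x,
      \<lambda>x \<xi>. c * \<phi>1 x \<xi>, \<lambda>x \<xi>. c * \<phi>2 x \<xi>))"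

definition st_diff :: "state \<Rightarrow> state \<Rightarrow> state" where
  "st_diff W W' = st_add W (st_scale (-1) W')"

definition Heq :: "real \<Rightarrow> real \<Rightarrow> real \<Rightarrow> real \<Rightarrow> real \<Rightarrow> real \<Rightarrow> state \<Rightarrow> state \<Rightarrow> bool" where
  "Heq \<rho>1 \<rho>2 k1 k2 \<alpha> L W W' \<longleftrightarrow>
     inH L (st_diff W W') \<and> Hnorm2 \<rho>1 \<rho>2 k1 k2 \<alpha> L (st_diff W W') = 0"

definition inDA :: "real \<Rightarrow> real \<Rightarrow> real \<Rightarrow> real \<Rightarrow> real \<Rightarrow> state \<Rightarrow> bool" where
  "inDA k1 k2 \<alpha> L \<eta> W = (case W of (u, v, U, V, \<phi>1, \<phi>2) \<Rightarrow>
     inH L W \<and> H10 L U V \<and>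
     (\<exists>g1 h1 g2 h2. has_L2_deriv (-L) 0 u g1 \<and> has_L2_deriv (-L) 0 g1 h1 \<and>
                    has_L2_deriv 0 L v g2 \<and> has_L2_deriv 0 L g2 h2 \<and>
                    of_real k1 * g1 0 = of_real k2 * g2 0) \<and>
     L2on ({-L..0} \<times> UNIV) (\<lambda>(x, \<xi>). of_real \<bar>\<xi>\<bar> * \<phi>1 x \<xi>) \<and>
     L2on ({-L..0} \<times> UNIV) (\<lambda>(x, \<xi>). - of_real (\<bar>\<xi>\<bar>\<^sup>2 + \<eta>) * \<phi>1 x \<xi> + of_real (mu \<alpha> \<xi>) * U x) \<and>
     L2on ({0..L} \<times> UNIV) (\<lambda>(x, \<xi>). of_real \<bar>\<xi>\<bar> * \<phi>2 x \<xi>) \<and>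
     L2on ({0..L} \<times> UNIV) (\<lambda>(x, \<xi>). - of_real (\<bar>\<xi>\<bar>\<^sup>2 + \<eta>) * \<phi>2 x \<xi> + of_real (mu \<alpha> \<xi>) * V x))"

definition Aop :: "real \<Rightarrow> real \<Rightarrow> real \<Rightarrow> real \<Rightarrow> real \<Rightarrow> real \<Rightarrow> real \<Rightarrow> state \<Rightarrow> state" where
  "Aop \<rho>1 \<rho>2 k1 k2 \<alpha> L \<eta> W = (case W of (u, v, U, V, \<phi>1, \<phi>2) \<Rightarrow>
     (U, V,
      \<lambda>x. (of_real k1 * d2 (-L) 0 u x
            - of_real (frakC \<alpha>) * (LINT \<xi>|lborel. of_real (mu \<alpha> \<xi>) * \<phi>1 x \<xi>)) / of_real \<rho>1,
      \<lambda>x. (of_real k2 * d2 0 L v x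
            - of_real (frakC \<alpha>) * (LINT \<xi>|lborel. of_real (mu \<alpha> \<xi>) * \<phi>2 x \<xi>)) / of_real \<rho>2,
      \<lambda>x \<xi>. - of_real (\<bar>\<xi>\<bar>\<^sup>2 + \<eta>) * \<phi>1 x \<xi> + of_real (mu \<alpha> \<xi>) * U x,
      \<lambda>x \<xi>. - of_real (\<bar>\<xi>\<bar>\<^sup>2 + \<eta>) * \<phi>2 x \<xi> + of_real (mu \<alpha> \<xi>) * V x))"

definition op_invertible ::
  "real \<Rightarrow> real \<Rightarrow> real \<Rightarrow> real \<Rightarrow> real \<Rightarrow> real \<Rightarrow> (state \<Rightarrow> bool) \<Rightarrow> (state \<Rightarrow> state) \<Rightarrow> bool" where
  "op_invertible \<rho>1 \<rho>2 k1 k2 \<alpha> L D T \<longleftrightarrow>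
     (\<forall>W W'. D W \<and> D W' \<and> Heq \<rho>1 \<rho>2 k1 k2 \<alpha> L (T W) (T W') \<longrightarrow> Heq \<rho>1 \<rho>2 k1 k2 \<alpha> L W W') \<and>
     (\<exists>C. \<forall>F. inH L F \<longrightarrow>
        (\<exists>W. D W \<and> Heq \<rho>1 \<rho>2 k1 k2 \<alpha> L (T W) F \<and>
             Hnorm \<rho>1 \<rho>2 k1 k2 \<alpha> L W \<le> C * Hnorm \<rho>1 \<rho>2 k1 k2 \<alpha> L F))"

definition resolvent_set_A :: "real \<Rightarrow> real \<Rightarrow> real \<Rightarrow> real \<Rightarrow> real \<Rightarrow> real \<Rightarrow> real \<Rightarrow> complex set" where
  "resolvent_set_A \<rho>1 \<rho>2 k1 k2 \<alpha> L \<eta> =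
     {z. op_invertible \<rho>1 \<rho>2 k1 k2 \<alpha> L (inDA k1 k2 \<alpha> L \<eta>)
            (\<lambda>W. st_diff (st_scale z W) (Aop \<rho>1 \<rho>2 k1 k2 \<alpha> L \<eta> W))}"

definition spectrum_A :: "real \<Rightarrow> real \<Rightarrow> real \<Rightarrow> real \<Rightarrow> real \<Rightarrow> real \<Rightarrow> real \<Rightarrow> complex set" where
  "spectrum_A \<rho>1 \<rho>2 k1 k2 \<alpha> L \<eta> = - resolvent_set_A \<rho>1 \<rho>2 k1 k2 \<alpha> L \<eta>"

end

theory Submission
  imports Defs
begin

lemma setint_nonneg:
  fixes f :: "'a \<Rightarrow> real"
  assumes "\<And>x. 0 \<le> f x"
  shows "0 \<le> (LINT x:S|M. f x)"
  unfolding set_lebesgue_integral_def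
  by (rule integral_nonneg_AE) (simp add: assms)

lemma AE_zero_of_int0:
  fixes h :: "'a \<Rightarrow> 'b::real_normed_vector"
  assumes "set_integrable M S (\<lambda>p. (norm (h p))\<^sup>2)" "(LINT p:S|M. (norm (h p))\<^sup>2) = 0"
  shows "AE p in M. p \<in> S \<longrightarrow> h p = 0"
proof -
  have "AE p in M. indicator S p *\<^sub>R (norm (h p))\<^sup>2 = (0::real)"
    using assms unfolding set_integrable_def set_lebesgue_integral_def
    by (subst integral_nonneg_eq_0_iff_AE[symmetric]) (auto simp: indicator_def)
  then show ?thesis
    by eventually_elim (auto simp: indicator_def split: if_splits)
qed

lemma zero_from_norm:
  assumes "H1 a b w" "w a = 0" "(LINT x:{a..b}|lborel. (cmod (d1 a b w x))\<^sup>2) = 0" "x \<in> {a..b}"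
  shows "w x = 0"
proof -
  have hd: "has_L2_deriv a b w (d1 a b w)"
    using assms(1) unfolding H1_def d1_def by (rule someI_ex)
  then have L2: "L2on {a..b} (d1 a b w)" by (simp add: has_L2_deriv_def)
  then have ae: "AE t in lborel. t \<in> {a..b} \<longrightarrow> d1 a b w t = 0"
    using assms(3) unfolding L2on_def by (intro AE_zero_of_int0) auto
  have "(LINT t:{a..x}|lborel. d1 a b w t) = 0"
    unfolding set_lebesgue_integral_def
    apply (rule integral_eq_zero_AE)
    using ae apply eventually_elim using assms(4) by (auto simp: indicator_def)
  then show ?thesis using hd assms(2,4) unfolding has_L2_deriv_def by auto
qed

lemma pointwise_bound:
  fixes \<xi> c :: real and n :: nat
  assumes "n > 0" "0 < \<xi>" "\<xi> \<le> 1 / real n" "\<xi>\<^sup>2 * c = 1"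
  shows "real n ^ 4 \<le> c\<^sup>2"
proof -
  have "real n * \<xi> \<le> 1" using assms by (simp add: field_simps)
  then have "(real n * \<xi>)\<^sup>2 \<le> 1" using assms by (simp add: power_le_one)
  then have "real n ^ 2 * \<xi>\<^sup>2 \<le> 1" by (simp add: power_mult_distrib)
  then have "real n ^ 2 * \<xi>\<^sup>2 * c \<le> c" using assms
  proof -
    have "c \<ge> 0"
    proof (rule ccontr)
      assume "\<not> c \<ge> 0"
      then have "\<xi>\<^sup>2 * c \<le> 0" by (simp add: mult_nonneg_nonpos)
      then show False using assms by simp
    qed
    then show ?thesis using mult_right_mono[OF \<open>real n ^ 2 * \<xi>\<^sup>2 \<le> 1\<close> \<open>c \<ge> 0\<close>] by simp
  qed
  then have c: "real n ^ 2 \<le> c" using assms by (simp add: mult.assoc)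
  then have "(real n ^ 2)\<^sup>2 \<le> c\<^sup>2" by (intro power_mono) auto
  then show ?thesis by simp
qed

lemma box_measure:
  fixes a b c d :: real
  assumes "a \<le> b" "c \<le> d"
  shows "emeasure lborel ({a..b} \<times> {c<..d}) = ennreal ((b - a) * (d - c))"
    and "({a..b} \<times> {c<..d}) \<in> sets (lborel :: (real \<times> real) measure)"
proof -
  have s: "({a..b} \<times> {c<..d}) \<in> sets (lborel \<Otimes>\<^sub>M lborel :: (real \<times> real) measure)"
    by (rule pair_measureI) auto
  then show "({a..b} \<times> {c<..d}) \<in> sets (lborel :: (real \<times> real) measure)"
    by (subst lborel_prod[symmetric]) (rule s)
  have "emeasure (lborel \<Otimes>\<^sub>M lborel) ({a..b} \<times> {c<..d}) = emeasure lborel {a..b} * emeasure lborel {c<..d}"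
    by (rule sigma_finite_measure.emeasure_pair_measure_Times) (auto intro: lborel.sigma_finite_measure_axioms)
  then show "emeasure lborel ({a..b} \<times> {c<..d}) = ennreal ((b - a) * (d - c))"
    using assms by (simp add: lborel_prod ennreal_mult)
qed

lemma blowup:
  fixes \<phi> :: "real \<Rightarrow> real \<Rightarrow> complex" and L :: real
  assumes L: "L > 0"
    and int: "set_integrable lborel ({-L..0}\<times>UNIV) (\<lambda>p. (cmod (\<phi> (fst p) (snd p)))\<^sup>2)"
    and ae: "AE p in lborel. p \<in> {-L..0}\<times>{0<..1} \<longrightarrow> (snd p)\<^sup>2 * cmod (\<phi> (fst p) (snd p)) = 1"
  shows False
proof -
  define I where "I = (LINT p:({-L..0}\<times>UNIV)|lborel. (cmod (\<phi> (fst p) (snd p)))\<^sup>2)"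
  have main: "real n * L \<le> I" if n: "n > 0" for n :: nat
  proof -
    define B where "B = {-L..0} \<times> {0<..1 / real n}"
    have Bm: "emeasure lborel B = ennreal (L * (1 / real n))" and Bs: "B \<in> sets lborel"
      unfolding B_def using box_measure[of "-L" 0 0 "1 / real n"] L n by auto
    have mB: "measure lborel B = L / real n"
      using Bm L n by (simp add: measure_def)
    have intB: "integrable lborel (\<lambda>p. real n ^ 4 * indicator B p)"
      by (intro integrable_mult_right integrable_real_indicator Bs) (simp add: Bm)
    have "(LINT p|lborel. real n ^ 4 * indicator B p) \<le> I"
      unfolding I_def set_lebesgue_integral_def
    proof (rule integral_mono_AE[OF intB])
      show "integrable lborel (\<lambda>p. indicat_real ({-L..0}\<times>UNIV) p *\<^sub>R (cmod (\<phi> (fst p) (snd p)))\<^sup>2)"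
        using int unfolding set_integrable_def .
      show "AE p in lborel. real n ^ 4 * indicat_real B p
              \<le> indicat_real ({-L..0}\<times>UNIV) p *\<^sub>R (cmod (\<phi> (fst p) (snd p)))\<^sup>2"
        using ae
      proof eventually_elim
        case (elim p)
        show ?case
        proof (cases "p \<in> B")
          case True
          have "1 / real n \<le> 1" using n by simp
          then have "p \<in> {-L..0}\<times>{0<..1}" using True unfolding B_def by auto
          then have "(snd p)\<^sup>2 * cmod (\<phi> (fst p) (snd p)) = 1" using elim by auto
          then have "real n ^ 4 \<le> (cmod (\<phi> (fst p) (snd p)))\<^sup>2"
            using True n unfolding B_def by (intro pointwise_bound) auto
          then show ?thesis using True unfolding B_def by (auto simp: indicator_def)
        next
          case False
          then show ?thesis by (auto simp: indicator_def)
        qed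
      qed
    qed
    moreover have "(LINT p|lborel. real n ^ 4 * indicator B p) = real n ^ 4 * (L / real n)"
      using mB by simp
    moreover have "real n * L \<le> real n ^ 4 * (L / real n)"
    proof -
      have "real n ^ 4 * (L / real n) = real n ^ 3 * L" using n by (simp add: power_eq_if field_simps)
      moreover have "real n \<le> real n ^ 3" using n
        by (metis less_one nat_less_le not_less of_nat_0_less_iff power_increasing_iff
            zero_less_numeral one_le_numeral power_one_right of_nat_1 of_nat_le_iff power_increasing le_add1 le_add_same_cancel1 linorder_not_le  Suc_leI)
      ultimately show ?thesis using L by (simp add: mult_right_mono)
    qed
    ultimately show ?thesis by linarith
  qed
  define n where "n = nat \<lceil>I / L\<rceil> + 1"
  have "real n * L \<le> I" using main[of n] by (simp add: n_def)
  moreover have "I / L < real n" unfolding n_def by linarith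
  then have "I < real n * L" using L by (simp add: field_simps)
  ultimately show False by linarith
qed

definition F0 :: state where
  "F0 = ((\<lambda>_. 0), (\<lambda>_. 0), (\<lambda>_. 0), (\<lambda>_. 0), (\<lambda>x \<xi>. if \<xi> \<in> {0<..1} then 1 else 0), (\<lambda>x \<xi>. 0))"

lemma L2on_zero: "L2on S (\<lambda>_. 0)"
  unfolding L2on_def set_integrable_def set_borel_measurable_def by simp

lemma inH_F0:
  assumes L: "L > 0"
  shows "inH L F0"
proof -
  have H1z: "H1 a b (\<lambda>_. 0)" for a b
    unfolding H1_def has_L2_deriv_def
    by (rule exI[of _ "\<lambda>_. 0"]) (simp add: L2on_zero set_lebesgue_integral_def)
  have L2z: "L2on S (\<lambda>(x::real, \<xi>::real). 0::complex)" for S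
    using L2on_zero[of S] by (simp add: case_prod_beta' split_def)
  have meas: "(\<lambda>(x::real, \<xi>::real). if \<xi> \<in> {0<..1::real} then 1 else (0::complex)) \<in> borel_measurable lborel"
  proof -
    have "(\<lambda>(x::real, \<xi>::real). if \<xi> \<in> {0<..1::real} then 1 else (0::complex)) = (\<lambda>p. of_real (indicator {0<..1} (snd p)))"
      by (auto simp: fun_eq_iff indicator_def)
    also have "\<dots> \<in> borel_measurable lborel"
    proof -
      have sn: "(\<lambda>p::real\<times>real. snd p) \<in> borel_measurable borel"
        by (intro borel_measurable_continuous_onI continuous_intros)
      have "(\<lambda>p::real\<times>real. indicator {0<..1::real} (snd p) :: real) \<in> borel_measurable borel"
        using measurable_compose[OF sn borel_measurable_indicator[of "{0<..1::real}"]] by simp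
      then show ?thesis by (simp add: measurable_lborel1)
    qed
    finally show ?thesis .
  qed
  have eq: "(\<lambda>p. indicator ({-L..0} \<times> UNIV) p *\<^sub>R (cmod ((\<lambda>(x::real, \<xi>::real). if \<xi> \<in> {0<..1::real} then 1 else (0::complex)) p))\<^sup>2)
     = indicator ({-L..0} \<times> {0<..1})"
    by (auto simp: fun_eq_iff indicator_def)
  have L2f: "L2on ({-L..0} \<times> UNIV) (\<lambda>(x::real, \<xi>::real). if \<xi> \<in> {0<..1::real} then 1 else (0::complex))"
    unfolding L2on_def set_integrable_def set_borel_measurable_def
  proof
    show "(\<lambda>x. indicat_real ({- L..0} \<times> UNIV) x *\<^sub>R (case x of (x, \<xi>) \<Rightarrow> if \<xi> \<in> {0<..1::real} then 1 else (0::complex))) \<in> borel_measurable lborel"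
    proof -
      have c: "closed ({- L..0} \<times> (UNIV::real set))" by (intro closed_Times) auto
      have "({- L..0} \<times> (UNIV::real set)) \<in> sets (borel :: (real \<times> real) measure)"
        by (rule borel_closed[OF c])
      then have m1: "indicat_real ({- L..0} \<times> (UNIV::real set)) \<in> borel_measurable (lborel :: (real \<times> real) measure)"
        using borel_measurable_indicator[of "{- L..0} \<times> (UNIV::real set)" "borel :: (real \<times> real) measure"]
        by simp
      show ?thesis using borel_measurable_scaleR[OF m1 meas] by (simp add: case_prod_beta')
    qed
    show "integrable lborel (\<lambda>p. indicator ({-L..0} \<times> UNIV) p *\<^sub>R (cmod ((\<lambda>(x::real, \<xi>::real). if \<xi> \<in> {0<..1::real} then 1 else (0::complex)) p))\<^sup>2)"
      unfolding eq using box_measure[of "-L" 0 0 1] L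
      by (intro integrable_real_indicator) auto
  qed
  show ?thesis
    unfolding inH_def F0_def H10_def using H1z L2z L2on_zero[of "{-L..0::real}"] L2on_zero[of "{0..L::real}"] L2f by simp
qed

lemma frakC_pos: "0 < \<alpha> \<Longrightarrow> \<alpha> < 1 \<Longrightarrow> frakC \<alpha> > 0"
  unfolding frakC_def by (intro divide_pos_pos sin_gt_zero) auto

lemma core:
  fixes s :: complex
  assumes pos: "\<rho>1 > 0" "\<rho>2 > 0" "k1 > 0" "k2 > 0" "frakC \<alpha> > 0" "L > 0"
    and inW: "inH L (u, v, U, V, \<phi>1, \<phi>2)"
    and inD: "inH L (U', b, c, d, \<Phi>, f)"
    and n0: "Hnorm2 \<rho>1 \<rho>2 k1 k2 \<alpha> L (U', b, c, d, \<Phi>, f) = 0"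
    and eqU: "\<And>x. U' x = s * U x"
    and eqP: "\<And>x \<xi>. \<Phi> x \<xi> = s * (- of_real (\<xi>\<^sup>2) * \<phi>1 x \<xi> + of_real (mu \<alpha> \<xi>) * U x)
                 - (if \<xi> \<in> {0<..1} then 1 else 0)"
    and s: "cmod s = 1"
  shows False
proof -
  define t1 where "t1 = (LINT x:{-L..0}|lborel. (cmod (c x))\<^sup>2)"
  define t2 where "t2 = (LINT x:{0..L}|lborel. (cmod (d x))\<^sup>2)"
  define t3 where "t3 = (LINT x:{-L..0}|lborel. (cmod (d1 (-L) 0 U' x))\<^sup>2)"
  define t4 where "t4 = (LINT x:{0..L}|lborel. (cmod (d1 0 L b x))\<^sup>2)"
  define t5 where "t5 = (LINT p:({-L..0} \<times> UNIV)|lborel. (cmod (\<Phi> (fst p) (snd p)))\<^sup>2)"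
  define t6 where "t6 = (LINT p:({0..L} \<times> UNIV)|lborel. (cmod (f (fst p) (snd p)))\<^sup>2)"
  have nn: "0 \<le> t1" "0 \<le> t2" "0 \<le> t3" "0 \<le> t4" "0 \<le> t5" "0 \<le> t6"
    unfolding t1_def t2_def t3_def t4_def t5_def t6_def by (auto intro: setint_nonneg)
  have "\<rho>1 * t1 + \<rho>2 * t2 + k1 * t3 + k2 * t4 + frakC \<alpha> * t5 + frakC \<alpha> * t6 = 0"
    using n0 unfolding Hnorm2_def t1_def t2_def t3_def t4_def t5_def t6_def by simp
  moreover have "0 \<le> \<rho>1 * t1" "0 \<le> \<rho>2 * t2" "0 \<le> k1 * t3" "0 \<le> k2 * t4"
      "0 \<le> frakC \<alpha> * t5" "0 \<le> frakC \<alpha> * t6"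
    using nn pos by auto
  ultimately have "k1 * t3 = 0" "frakC \<alpha> * t5 = 0" by linarith+
  then have t3: "t3 = 0" and t5: "t5 = 0" using pos by auto
  from inD have H: "H1 (-L) 0 U'" "U' (-L) = 0"
    and L2P: "L2on ({-L..0} \<times> UNIV) (\<lambda>(x, \<xi>). \<Phi> x \<xi>)"
    unfolding inH_def H10_def by auto
  have U0: "U x = 0" if "x \<in> {-L..0}" for x
  proof -
    have "U' x = 0" using zero_from_norm[OF H(1) H(2) t3[unfolded t3_def] that] .
    then show ?thesis using eqU[of x] s by auto
  qed
  have "AE p in lborel. p \<in> {-L..0} \<times> UNIV \<longrightarrow> \<Phi> (fst p) (snd p) = 0"
    using L2P t5 unfolding L2on_def t5_def
    by (intro AE_zero_of_int0) (auto simp: case_prod_beta')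
  then have ae: "AE p in lborel. p \<in> {-L..0}\<times>{0<..1} \<longrightarrow> (snd p)\<^sup>2 * cmod (\<phi>1 (fst p) (snd p)) = 1"
  proof eventually_elim
    case (elim p)
    show ?case
    proof
      assume p: "p \<in> {-L..0}\<times>{0<..1}"
      then have "\<Phi> (fst p) (snd p) = 0" using elim by auto
      moreover have "U (fst p) = 0" using p U0 by auto
      ultimately have "s * (- of_real ((snd p)\<^sup>2) * \<phi>1 (fst p) (snd p)) = 1"
        using eqP[of "fst p" "snd p"] p by auto
      then have "cmod (s * (- of_real ((snd p)\<^sup>2) * \<phi>1 (fst p) (snd p))) = 1" by simp
      then show "(snd p)\<^sup>2 * cmod (\<phi>1 (fst p) (snd p)) = 1"
        using s by (simp add: norm_mult norm_power)
    qed
  qed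
  from inW have "L2on ({-L..0} \<times> UNIV) (\<lambda>(x, \<xi>). \<phi>1 x \<xi>)"
    unfolding inH_def by auto
  then have "set_integrable lborel ({-L..0}\<times>UNIV) (\<lambda>p. (cmod (\<phi>1 (fst p) (snd p)))\<^sup>2)"
    unfolding L2on_def by (simp add: case_prod_beta')
  then show False using blowup[OF pos(6) _ ae] by blast
qed

lemma not_inv:
  fixes s :: complex
  assumes pos: "\<rho>1 > 0" "\<rho>2 > 0" "k1 > 0" "k2 > 0" "0 < \<alpha>" "\<alpha> < 1" "L > 0"
    and hT: "\<And>u v U V \<phi>1 \<phi>2. \<exists>b c d f. st_diff (T (u, v, U, V, \<phi>1, \<phi>2)) F0 =
        (\<lambda>x. s * U x, b, c, d,
         \<lambda>x \<xi>. s * (- of_real (\<xi>\<^sup>2) * \<phi>1 x \<xi> + of_real (mu \<alpha> \<xi>) * U x) - (if \<xi> \<in> {0<..1} then 1 else 0), f)"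
    and s: "cmod s = 1"
  shows "\<not> op_invertible \<rho>1 \<rho>2 k1 k2 \<alpha> L (inDA k1 k2 \<alpha> L 0) T"
proof
  assume "op_invertible \<rho>1 \<rho>2 k1 k2 \<alpha> L (inDA k1 k2 \<alpha> L 0) T"
  then obtain W where W: "inDA k1 k2 \<alpha> L 0 W" "Heq \<rho>1 \<rho>2 k1 k2 \<alpha> L (T W) F0"
    unfolding op_invertible_def using inH_F0[OF pos(7)] by blast
  obtain u v U V \<phi>1 \<phi>2 where Wd: "W = (u, v, U, V, \<phi>1, \<phi>2)" by (cases W) auto
  obtain b c d f where D: "st_diff (T W) F0 =
        (\<lambda>x. s * U x, b, c, d,
         \<lambda>x \<xi>. s * (- of_real (\<xi>\<^sup>2) * \<phi>1 x \<xi> + of_real (mu \<alpha> \<xi>) * U x) - (if \<xi> \<in> {0<..1} then 1 else 0), f)"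
    using hT[of u v U V \<phi>1 \<phi>2] Wd by blast
  have inW: "inH L (u, v, U, V, \<phi>1, \<phi>2)" using W(1) Wd unfolding inDA_def by auto
  from W(2) have "inH L (st_diff (T W) F0)" "Hnorm2 \<rho>1 \<rho>2 k1 k2 \<alpha> L (st_diff (T W) F0) = 0"
    unfolding Heq_def by auto
  then show False
    unfolding D by (intro core[OF pos(1-4) frakC_pos[OF pos(5,6)] pos(7) inW, of _ _ _ _ _ _ s]) (auto simp: s)
qed

theorem proposition4p4:
  fixes \<rho>1 \<rho>2 k1 k2 L \<alpha> :: real
  assumes "\<rho>1 > 0" "\<rho>2 > 0" "k1 > 0" "k2 > 0" "L > 0" "0 < \<alpha>" "\<alpha> < 1"
  shows "\<not> op_invertible \<rho>1 \<rho>2 k1 k2 \<alpha> L (inDA k1 k2 \<alpha> L 0) (Aop \<rho>1 \<rho>2 k1 k2 \<alpha> L 0)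
         \<and> (0::complex) \<in> spectrum_A \<rho>1 \<rho>2 k1 k2 \<alpha> L 0"
proof
  show "\<not> op_invertible \<rho>1 \<rho>2 k1 k2 \<alpha> L (inDA k1 k2 \<alpha> L 0) (Aop \<rho>1 \<rho>2 k1 k2 \<alpha> L 0)"
    using assms
    by (intro not_inv[where s=1]) (auto simp: st_diff_def st_add_def st_scale_def Aop_def F0_def fun_eq_iff)
  have "\<not> op_invertible \<rho>1 \<rho>2 k1 k2 \<alpha> L (inDA k1 k2 \<alpha> L 0)
            (\<lambda>W. st_diff (st_scale 0 W) (Aop \<rho>1 \<rho>2 k1 k2 \<alpha> L 0 W))"
    using assms
    by (intro not_inv[where s="-1"]) (auto simp: st_diff_def st_add_def st_scale_def Aop_def F0_def fun_eq_iff)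
  then show "(0::complex) \<in> spectrum_A \<rho>1 \<rho>2 k1 k2 \<alpha> L 0"
    unfolding spectrum_A_def resolvent_set_A_def by auto
qed

end
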